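(* Assume the index vectors $\mathbf v_1,\dots,\mathbf v_k\in\mathbb R^d$ are orthonormal and that $\sigma^*$ has information exponent $p^*\ge2$. Let $\mathbf w(t)$ solve $\frac{d}{dt}\mathbf w=-(I_d-\mathbf w\mathbf w^T)\nabla L(\mathbf w)$ from a unit vector $\mathbf w(0)$, let $\mathbf u_j(t)=\mathbf v_j^T\mathbf w(t)$, and suppose $|\mathbf u_1(0)|=\max_{j\in[k]}|\mathbf u_j(0)|$. Then: (i) if $\mathbf u_j(0)>0$ for all $j\in[k]$, then $\mathbf u_1(t)=\max_{j\in[k]}\mathbf u_j(t)$ for all $t\ge0$; (ii) if $\sigma^*$ is even, then for any initialization $|\mathbf u_1(t)|=\max_{j\in[k]}|\mathbf u_j(t)|$ for all $t\ge0$.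
   Context: Let $h_p$ be the probabilist's Hermite polynomials normalized to be orthonormal in $L^2$ of the standard Gaussian measure. Let $\sigma=\sum_{p\ge1}a_ph_p$, $\sigma^*=\sum_{p\ge1}b_ph_p$ be square integrable w.r.t. the standard Gaussian, $p^*=\min\{p:b_p\neq0\}$, $c_p=a_pb_p$. Standing assumptions: $c_{p^*}>0$, $c_p\ge0$ for all $p\ge p^*$, and $\sum_{p\ge p^*}c_p\,p<\infty$. The loss is $L(\mathbf w)=C-\mathbb E_{\mathbf x\sim\mathcal N(0,I_d)}\big[\sigma(\mathbf w^T\mathbf x)\sum_{j=1}^k\sigma^*(\mathbf v_j^T\mathbf x)\big]$, which for unit $\mathbf w$ equals $C-\sum_{p\ge p^*}c_p\sum_j(\mathbf v_j^T\mathbf w)^p$; this formula defines $L$ and its Euclidean gradient $\nabla L$ on $\mathbb R^d$. With orthonormal index vectors, the dot products evolve as $\frac{d}{dt}\mathbf u_j=\sum_{p\ge p^*}c_pp\big(\mathbf u_j^{p-1}-\mathbf u_j\sum_{j'}\mathbf u_{j'}^p\big)$. *)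

theory Defs
  imports "HOL-Probability.Probability"
begin

text \<open>Probabilist's Hermite polynomials He_p and their orthonormalisation
  h_p = He_p / sqrt(p!) in L^2 of the standard Gaussian measure.\<close>
fun He :: "nat \<Rightarrow> real \<Rightarrow> real" where
  "He 0 x = 1"
| "He (Suc 0) x = x"
| "He (Suc (Suc n)) x = x * He (Suc n) x - real (Suc n) * He n x"

definition hermite_h :: "nat \<Rightarrow> real \<Rightarrow> real" where
  "hermite_h p x = He p x / sqrt (fact p)"

definition gauss_L2 :: "(real \<Rightarrow> real) \<Rightarrow> bool" where
  "gauss_L2 f \<longleftrightarrow> f \<in> borel_measurable borel \<and>
     integrable lborel (\<lambda>x. std_normal_density x * (f x)\<^sup>2)"

definition hcoeff :: "(real \<Rightarrow> real) \<Rightarrow> nat \<Rightarrow> real" where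
  "hcoeff f p = (LINT x|lborel. std_normal_density x * f x * hermite_h p x)"

definition info_exp :: "(real \<Rightarrow> real) \<Rightarrow> nat" where
  "info_exp f = (LEAST p. hcoeff f p \<noteq> 0)"

text \<open>The loss L(w) = C - sum_p c_p sum_{j=1..k} (v_j . w)^p (with c_p = a_p b_p),
  and its Euclidean gradient, obtained by formal termwise differentiation of this formula.\<close>
definition lossL :: "real \<Rightarrow> (nat \<Rightarrow> real) \<Rightarrow> (nat \<Rightarrow> real^'d) \<Rightarrow> nat \<Rightarrow> real^'d \<Rightarrow> real" where
  "lossL C c v k w = C - (\<Sum>p. c p * (\<Sum>j\<in>{1..k}. (v j \<bullet> w) ^ p))"

definition gradL :: "(nat \<Rightarrow> real) \<Rightarrow> (nat \<Rightarrow> real^'d) \<Rightarrow> nat \<Rightarrow> real^'d \<Rightarrow> real^'d" where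
  "gradL c v k w = - (\<Sum>j\<in>{1..k}. (\<Sum>p. c p * real p * (v j \<bullet> w) ^ (p - 1)) *\<^sub>R v j)"

end

theory Submission
  imports Defs
begin


lemma He_neg: "He p (- x) = (-1) ^ p * He p x"
  by (induction p x rule: He.induct) (auto simp: algebra_simps)

lemma hcoeff_odd_zero:
  assumes ev: "\<forall>x. f (- x) = f x" and od: "odd p"
  shows "hcoeff f p = 0"
proof -
  let ?F = "\<lambda>x. std_normal_density x * f x * hermite_h p x"
  have odd_F: "?F (- x) = - ?F x" for x
    using od by (simp add: hermite_h_def He_neg ev std_normal_density_def)
  have "(\<integral>x. ?F x \<partial>lborel) = \<bar>-1::real\<bar> *\<^sub>R (\<integral>x. ?F (0 + (-1) * x) \<partial>lborel)"
    by (rule lborel_integral_real_affine) simp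
  also have "\<dots> = - (\<integral>x. ?F x \<partial>lborel)"
    using odd_F by simp
  finally show ?thesis unfolding hcoeff_def by simp
qed

lemma suminf_shift0:
  fixes f :: "nat \<Rightarrow> real"
  assumes "f 0 = 0"
  shows "suminf f = (\<Sum>n. f (Suc n))"
proof (cases "summable f")
  case True then show ?thesis using suminf_split_head[OF True] assms by simp
next
  case False
  then have F2: "\<not> summable (\<lambda>n. f (Suc n))" by (simp add: summable_Suc_iff)
  have "(\<lambda>s. f sums s) = (\<lambda>s. False)" using False by (auto simp: summable_def)
  moreover have "(\<lambda>s. (\<lambda>n. f (Suc n)) sums s) = (\<lambda>s. False)" using F2 by (auto simp: summable_def)
  ultimately show ?thesis unfolding suminf_def by simp
qed

lemma keep_sign:
  fixes f f' :: "real \<Rightarrow> real"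
  assumes der: "\<And>t. t \<ge> 0 \<Longrightarrow> (f has_real_derivative f' t) (at t within {0..})"
    and f0: "f 0 \<ge> 0"
    and loc: "\<And>t0. t0 \<ge> 0 \<Longrightarrow> f t0 = 0 \<Longrightarrow> \<exists>\<epsilon>>0. \<exists>K. \<forall>t\<in>{t0..t0+\<epsilon>}. \<bar>f' t\<bar> \<le> K * \<bar>f t\<bar>"
    and t: "t \<ge> 0"
  shows "f t \<ge> 0"
proof (rule ccontr)
  assume neg: "\<not> f t \<ge> 0"
  have cont: "continuous_on {a..b} f" if "0 \<le> a" for a b
  proof -
    have "continuous (at x within {0..}) f" if "x \<ge> 0" for x
      using der[OF that] DERIV_continuous by blast
    then have "continuous (at x within {a..b}) f" if "x \<in> {a..b}" for x
      using that \<open>0 \<le> a\<close> by (meson atLeastAtMost_iff atLeast_iff continuous_within_subset order_trans subsetI)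
    then show ?thesis by (simp add: continuous_on_eq_continuous_within)
  qed
  define A where "A = {s\<in>{0..t}. f s \<ge> 0}"
  have A0: "0 \<in> A" using f0 t by (simp add: A_def)
  have Abdd: "bdd_above A" by (auto simp: A_def bdd_above_def)
  have Aclosed: "closed A"
  proof -
    have "closed ({0..t} \<inter> f -` {0..})"
      using cont[of 0 t] by (intro continuous_closed_preimage) auto
    moreover have "A = {0..t} \<inter> f -` {0..}" by (auto simp: A_def)
    ultimately show ?thesis by simp
  qed
  define t0 where "t0 = Sup A"
  have t0A: "t0 \<in> A" unfolding t0_def using A0 Abdd Aclosed closed_contains_Sup by blast
  then have t0: "0 \<le> t0" "t0 \<le> t" "f t0 \<ge> 0" by (auto simp: A_def)
  have above: "s \<in> A \<Longrightarrow> s \<le> t0" for s unfolding t0_def using Abdd by (simp add: cSup_upper)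
  have tt0: "t0 < t" using t0 neg by (cases "t0 = t") auto
  have neg_after: "f s < 0" if "t0 < s" "s \<le> t" for s
    using above[of s] that t0 by (force simp: A_def)
  obtain z where z: "t0 \<le> z" "z \<le> t" "f z = 0"
    using IVT2'[of f t 0 t0] neg t0 cont[of t0 t] by force
  have "z \<in> A" using z t0 by (simp add: A_def)
  then have "z = t0" using above z by force
  with z have ft0: "f t0 = 0" by simp
  obtain \<epsilon> K where e: "\<epsilon> > 0" and K: "\<forall>s\<in>{t0..t0+\<epsilon>}. \<bar>f' s\<bar> \<le> K * \<bar>f s\<bar>"
    using loc[OF t0(1) ft0] by blast
  define t2 where "t2 = min t (t0 + \<epsilon>)"
  have t2: "t0 < t2" "t2 \<le> t" "t2 \<le> t0 + \<epsilon>" using e tt0 by (auto simp: t2_def)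
  define h where "h s = (f s)\<^sup>2 * exp (- 2 * K * s)" for s
  have hder: "(h has_real_derivative (2 * f s * f' s * exp (- 2 * K * s) - (f s)\<^sup>2 * (2 * K) * exp (- 2 * K * s))) (at s)"
    if "t0 < s" "s < t2" for s
  proof -
    have "s \<in> interior {0..}" using that t0 by (simp add: interior_real_atLeast)
    then have d: "(f has_real_derivative f' s) (at s)"
      using der[of s] that t0 at_within_interior by fastforce
    show ?thesis unfolding h_def
      by (rule derivative_eq_intros d refl | simp)+
  qed
  have hcont: "continuous_on {t0..t2} h"
    unfolding h_def by (intro continuous_intros cont[OF t0(1)])
  have "h t2 \<le> h t0"
  proof (rule DERIV_nonpos_imp_decreasing_open[OF less_imp_le[OF t2(1)] _ hcont])
    fix x assume x: "t0 < x" "x < t2"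
    have "f x * f' x \<le> K * (f x)\<^sup>2"
    proof -
      have "f x * f' x \<le> \<bar>f x\<bar> * \<bar>f' x\<bar>" by (metis abs_ge_self abs_mult)
      also have "\<dots> \<le> \<bar>f x\<bar> * (K * \<bar>f x\<bar>)" using K x t2 by (intro mult_left_mono) auto
      finally show ?thesis by (simp add: power2_eq_square algebra_simps)
    qed
    then have "2 * f x * f' x * exp (- 2 * K * x) - (f x)\<^sup>2 * (2 * K) * exp (- 2 * K * x) \<le> 0"
      by (simp add: algebra_simps mult_right_mono)
    then show "\<exists>y. (h has_real_derivative y) (at x) \<and> y \<le> 0" using hder[OF x] by blast
  qed
  moreover have "h t0 = 0" using ft0 by (simp add: h_def)
  moreover have "h t2 > 0" using neg_after[of t2] t2 by (simp add: h_def)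
  ultimately show False by simp
qed



lemma ps_abs_summable:
  fixes a :: "nat \<Rightarrow> real"
  assumes a0: "\<And>n. a n \<ge> 0" and sm: "summable (\<lambda>n. a n * R ^ n)" and u: "\<bar>u\<bar> \<le> R"
  shows "summable (\<lambda>n. a n * u ^ n)" "\<bar>\<Sum>n. a n * u ^ n\<bar> \<le> (\<Sum>n. a n * R ^ n)"
proof -
  have b: "norm (a n * u ^ n) \<le> a n * R ^ n" for n
    using a0[of n] u by (simp add: abs_mult power_abs mult_left_mono power_mono)
  show "summable (\<lambda>n. a n * u ^ n)" by (rule summable_comparison_test[OF _ sm]) (use b in blast)
  show "\<bar>\<Sum>n. a n * u ^ n\<bar> \<le> (\<Sum>n. a n * R ^ n)" using norm_suminf_le[OF b sm] by simp
qed

lemma ps_ext_bound: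
  fixes a :: "nat \<Rightarrow> real"
  assumes a0: "\<And>n. a n \<ge> 0" and sm: "summable a"
  shows "\<exists>\<delta>>0. \<exists>M. \<forall>u. \<bar>u\<bar> \<le> 1 + \<delta> \<longrightarrow> \<bar>\<Sum>n. a n * u ^ n\<bar> \<le> M"
proof (cases "\<exists>u0>1. summable (\<lambda>n. a n * u0 ^ n)")
  case True
  then obtain u0 where u0: "u0 > 1" "summable (\<lambda>n. a n * u0 ^ n)" by blast
  show ?thesis
    by (rule exI[of _ "u0 - 1"], use u0 in simp, rule exI[of _ "\<Sum>n. a n * u0 ^ n"])
       (use ps_abs_summable[OF a0 u0(2)] in simp)
next
  case False
  have sm1: "summable (\<lambda>n. a n * 1 ^ n)" using sm by simp
  have ns: "\<not> summable (\<lambda>n. a n * u ^ n)" if "\<bar>u\<bar> > 1" for u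
  proof
    assume s: "summable (\<lambda>n. a n * u ^ n)"
    have "summable (\<lambda>n. a n * ((1 + \<bar>u\<bar>) / 2) ^ n)"
      by (rule powser_inside[OF s]) (use that in auto)
    moreover have "(1 + \<bar>u\<bar>) / 2 > 1" using that by simp
    ultimately show False using False by blast
  qed
  have eqc: "(\<Sum>n. a n * u ^ n) = The (\<lambda>s. False)" if "\<bar>u\<bar> > 1" for u
  proof -
    have "(\<lambda>s. (\<lambda>n. a n * u ^ n) sums s) = (\<lambda>s. False)" using ns[OF that] by (auto simp: summable_def)
    then show ?thesis unfolding suminf_def by simp
  qed
  have "\<bar>\<Sum>n. a n * u ^ n\<bar> \<le> max (\<Sum>n. a n) \<bar>The (\<lambda>s. False)\<bar>" for u :: real
  proof (cases "\<bar>u\<bar> > 1")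
    case True then show ?thesis using eqc[OF True] by simp
  next
    case False then show ?thesis using ps_abs_summable(2)[OF a0 sm1, of u] by simp
  qed
  then show ?thesis by (intro exI[of _ 1]) auto
qed

lemma ps_lipschitz:
  fixes a :: "nat \<Rightarrow> real"
  assumes a0: "\<And>n. a n \<ge> 0" and sm: "summable a" and rho: "0 \<le> \<rho>" "\<rho> < 1"
  shows "\<exists>L. \<forall>x y. \<bar>x\<bar> \<le> \<rho> \<longrightarrow> \<bar>y\<bar> \<le> \<rho> \<longrightarrow>
            \<bar>(\<Sum>n. a n * x ^ n) - (\<Sum>n. a n * y ^ n)\<bar> \<le> L * \<bar>x - y\<bar>"
proof -
  let ?G = "\<lambda>x. \<Sum>n. a n * x ^ n"
  let ?D = "\<lambda>x. \<Sum>n. diffs a n * x ^ n"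
  have sm1: "summable (\<lambda>n. a n * 1 ^ n)" using sm by simp
  have der: "(?G has_real_derivative ?D x) (at x)" if "\<bar>x\<bar> < 1" for x
    using termdiffs_strong[OF sm1, of x] that by simp
  have smd: "summable (\<lambda>n. diffs a n * \<rho> ^ n)"
    by (rule termdiff_converges[of _ 1]) (use rho powser_inside[OF sm1] in auto)
  have d0: "diffs a n \<ge> 0" for n using a0 by (simp add: diffs_def)
  define L where "L = (\<Sum>n. diffs a n * \<rho> ^ n)"
  have Db: "\<bar>?D z\<bar> \<le> L" if "\<bar>z\<bar> \<le> \<rho>" for z
    unfolding L_def by (rule ps_abs_summable(2)[OF d0 smd that])
  have main: "\<bar>?G y - ?G x\<bar> \<le> L * (y - x)" if "x < y" "\<bar>x\<bar> \<le> \<rho>" "\<bar>y\<bar> \<le> \<rho>" for x y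
  proof -
    have "\<And>z. x \<le> z \<Longrightarrow> z \<le> y \<Longrightarrow> (?G has_real_derivative ?D z) (at z)"
      using that rho by (intro der) auto
    from MVT2[OF that(1) this] obtain z where z: "x < z" "z < y" "?G y - ?G x = (y - x) * ?D z"
      by blast
    have "\<bar>z\<bar> \<le> \<rho>" using z that by auto
    then have "\<bar>?D z\<bar> \<le> L" by (rule Db)
    then show ?thesis using z that by (simp add: abs_mult mult.commute mult_right_mono)
  qed
  show ?thesis
  proof (intro exI[of _ L] allI impI)
    fix x y :: real assume xy: "\<bar>x\<bar> \<le> \<rho>" "\<bar>y\<bar> \<le> \<rho>"
    consider "x < y" | "x = y" | "y < x" by linarith
    then show "\<bar>?G x - ?G y\<bar> \<le> L * \<bar>x - y\<bar>"
    proof cases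
      case 1 then show ?thesis using main[OF 1 xy] by (simp add: abs_minus_commute)
    next
      case 3 then show ?thesis using main[OF 3 xy(2,1)] by simp
    qed simp
  qed
qed



lemma near_within:
  fixes x :: "real \<Rightarrow> real"
  assumes "continuous (at t0 within {0..}) x" "t0 \<ge> 0" "e > 0"
  shows "\<exists>d>0. \<forall>t\<in>{t0..t0+d}. \<bar>x t - x t0\<bar> < e"
proof -
  obtain d where d: "d > 0" "\<forall>t\<in>{0..}. dist t t0 < d \<longrightarrow> dist (x t) (x t0) < e"
    using assms(1,3) unfolding continuous_within_eps_delta by blast
  show ?thesis
    by (rule exI[of _ "d/2"]) (use d assms(2) in \<open>auto simp: dist_real_def\<close>)
qed

lemma pair_keep:
  fixes x y S g :: "real \<Rightarrow> real"
  assumes dx: "\<And>t. t \<ge> 0 \<Longrightarrow> (x has_real_derivative (g (x t) - S t * x t)) (at t within {0..})"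
    and dy: "\<And>t. t \<ge> 0 \<Longrightarrow> (y has_real_derivative (g (y t) - S t * y t)) (at t within {0..})"
    and Sb: "\<And>t. t \<ge> 0 \<Longrightarrow> \<bar>S t\<bar> \<le> K0"
    and bes: "\<And>t. t \<ge> 0 \<Longrightarrow> (x t)\<^sup>2 + (y t)\<^sup>2 \<le> 1"
    and lip: "\<And>a b. \<bar>a\<bar> \<le> 9/10 \<Longrightarrow> \<bar>b\<bar> \<le> 9/10 \<Longrightarrow> \<bar>g a - g b\<bar> \<le> L * \<bar>a - b\<bar>"
    and init: "y 0 \<le> x 0" and t: "t \<ge> 0"
  shows "y t \<le> x t"
proof -
  let ?f = "\<lambda>t. x t - y t"
  let ?f' = "\<lambda>t. (g (x t) - S t * x t) - (g (y t) - S t * y t)"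
  have "?f t \<ge> 0"
  proof (rule keep_sign[of ?f ?f'])
    fix t :: real assume "t \<ge> 0"
    show "(?f has_real_derivative ?f' t) (at t within {0..})"
      using dx[OF \<open>t \<ge> 0\<close>] dy[OF \<open>t \<ge> 0\<close>] by (rule derivative_intros)
  next
    show "?f 0 \<ge> 0" using init by simp
  next
    show "t \<ge> 0" by (rule t)
  next
    fix t0 :: real assume t0: "t0 \<ge> 0" and z: "?f t0 = 0"
    have "2 * (x t0)\<^sup>2 \<le> 1" using bes[OF t0] z by simp
    then have "(x t0)\<^sup>2 < (3/4)\<^sup>2" by (simp add: power2_eq_square)
    then have ax: "\<bar>x t0\<bar> < 3/4" by (metis abs_of_nonneg power2_abs power_less_imp_less_base zero_le_divide_iff zero_le_numeral)
    have cx: "continuous (at t0 within {0..}) x" using dx[OF t0] DERIV_continuous by blast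
    have cy: "continuous (at t0 within {0..}) y" using dy[OF t0] DERIV_continuous by blast
    obtain d1 where d1: "d1 > 0" "\<forall>t\<in>{t0..t0+d1}. \<bar>x t - x t0\<bar> < 1/10"
      using near_within[OF cx t0, of "1/10"] by auto
    obtain d2 where d2: "d2 > 0" "\<forall>t\<in>{t0..t0+d2}. \<bar>y t - y t0\<bar> < 1/10"
      using near_within[OF cy t0, of "1/10"] by auto
    have "\<forall>t\<in>{t0..t0+min d1 d2}. \<bar>?f' t\<bar> \<le> (L + K0) * \<bar>?f t\<bar>"
    proof
      fix t assume tt: "t \<in> {t0..t0 + min d1 d2}"
      have "\<bar>x t - x t0\<bar> < 1/10" using d1 tt by auto
      moreover have "\<bar>y t - y t0\<bar> < 1/10" using d2 tt by auto
      ultimately have "\<bar>x t\<bar> \<le> 9/10" "\<bar>y t\<bar> \<le> 9/10" using ax z by linarith+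
      then have l: "\<bar>g (x t) - g (y t)\<bar> \<le> L * \<bar>x t - y t\<bar>" by (rule lip)
      have s: "\<bar>S t * (x t - y t)\<bar> \<le> K0 * \<bar>x t - y t\<bar>"
        using Sb[of t] tt t0 by (simp add: abs_mult mult_right_mono)
      have "?f' t = (g (x t) - g (y t)) - S t * (x t - y t)" by (simp add: algebra_simps)
      then have "\<bar>?f' t\<bar> \<le> \<bar>g (x t) - g (y t)\<bar> + \<bar>S t * (x t - y t)\<bar>" by simp
      also have "\<dots> \<le> (L + K0) * \<bar>?f t\<bar>" using l s by (simp add: algebra_simps)
      finally have "\<bar>?f' t\<bar> \<le> (L + K0) * \<bar>?f t\<bar>" .
      then show "\<bar>?f' t\<bar> \<le> (L + K0) * \<bar>?f t\<bar>" by simp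
    qed
    moreover have "min d1 d2 > 0" using d1 d2 by simp
    ultimately show "\<exists>\<epsilon>>0. \<exists>K. \<forall>t\<in>{t0..t0+\<epsilon>}. \<bar>?f' t\<bar> \<le> K * \<bar>?f t\<bar>" by blast
  qed
  then show ?thesis by simp
qed

lemma bessel2:
  fixes w a b :: "'a::real_inner"
  assumes "a \<bullet> a = 1" "b \<bullet> b = 1" "a \<bullet> b = 0"
  shows "(a \<bullet> w)\<^sup>2 + (b \<bullet> w)\<^sup>2 \<le> w \<bullet> w"
proof -
  have "0 \<le> (w - (a \<bullet> w) *\<^sub>R a - (b \<bullet> w) *\<^sub>R b) \<bullet> (w - (a \<bullet> w) *\<^sub>R a - (b \<bullet> w) *\<^sub>R b)"
    by simp
  also have "\<dots> = w \<bullet> w - (a \<bullet> w)\<^sup>2 - (b \<bullet> w)\<^sup>2"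
    using assms by (simp add: inner_diff_left inner_diff_right inner_commute power2_eq_square algebra_simps)
  finally show ?thesis by simp
qed



theorem lemma5:
  fixes \<sigma> \<sigma>s :: "real \<Rightarrow> real"
    and v :: "nat \<Rightarrow> real^'d"
    and k :: nat
    and w :: "real \<Rightarrow> real^'d"
  defines "c \<equiv> (\<lambda>p. hcoeff \<sigma> p * hcoeff \<sigma>s p)"
      and "ps \<equiv> info_exp \<sigma>s"
  assumes L2: "gauss_L2 \<sigma>" "gauss_L2 \<sigma>s"
      and no_const: "hcoeff \<sigma> 0 = 0" "hcoeff \<sigma>s 0 = 0"
      and cps_pos: "c ps > 0"
      and c_nonneg: "\<And>p. p \<ge> ps \<Longrightarrow> c p \<ge> 0"
      and c_summ: "summable (\<lambda>p. c p * real p)"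
      and ps_ge2: "ps \<ge> 2"
      and k_pos: "k \<ge> 1"
      and orth: "\<And>i j. i \<in> {1..k} \<Longrightarrow> j \<in> {1..k} \<Longrightarrow> v i \<bullet> v j = (if i = j then 1 else 0)"
      and w0: "norm (w 0) = 1"
      and flow: "\<And>t. t \<ge> 0 \<Longrightarrow>
         (w has_vector_derivative
            (- (gradL c v k (w t) - (w t \<bullet> gradL c v k (w t)) *\<^sub>R w t))) (at t within {0..})"
      and u1max: "\<And>j. j \<in> {1..k} \<Longrightarrow> \<bar>v j \<bullet> w 0\<bar> \<le> \<bar>v 1 \<bullet> w 0\<bar>"
  shows "((\<forall>j\<in>{1..k}. v j \<bullet> w 0 > 0) \<longrightarrow>
            (\<forall>t\<ge>0. \<forall>j\<in>{1..k}. v j \<bullet> w t \<le> v 1 \<bullet> w t))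
       \<and> ((\<forall>x. \<sigma>s (- x) = \<sigma>s x) \<longrightarrow>
            (\<forall>t\<ge>0. \<forall>j\<in>{1..k}. \<bar>v j \<bullet> w t\<bar> \<le> \<bar>v 1 \<bullet> w t\<bar>))"
proof -
  define g where "g u = (\<Sum>p. c p * real p * u ^ (p - 1))" for u
  define a where "a n = c (Suc n) * real (Suc n)" for n
  have c_low: "c p = 0" if "p < ps" for p
  proof -
    have "hcoeff \<sigma>s p = 0" using that not_less_Least unfolding ps_def info_exp_def by blast
    then show ?thesis by (simp add: c_def)
  qed
  have a0: "a n \<ge> 0" for n
  proof (cases "Suc n \<ge> ps")
    case True then show ?thesis using c_nonneg[OF True] by (simp add: a_def)
  next
    case False then show ?thesis using c_low[of "Suc n"] by (simp add: a_def)
  qed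
  have asm: "summable a"
    using c_summ unfolding a_def by (subst summable_Suc_iff[of "\<lambda>p. c p * real p"])
  have g_eq: "g u = (\<Sum>n. a n * u ^ n)" for u
    unfolding g_def a_def by (subst suminf_shift0) auto
  have grad_eq: "gradL c v k x = - (\<Sum>j\<in>{1..k}. g (v j \<bullet> x) *\<^sub>R v j)" for x
    by (simp add: gradL_def g_def)
  define u where "u j t = v j \<bullet> w t" for j t
  define S where "S t = (\<Sum>i\<in>{1..k}. u i t * g (u i t))" for t
  define F where "F t = - (gradL c v k (w t) - (w t \<bullet> gradL c v k (w t)) *\<^sub>R w t)" for t
  have wgrad: "w t \<bullet> gradL c v k (w t) = - S t" for t
    by (simp add: grad_eq S_def u_def inner_sum_right inner_commute mult.commute)
  have vgrad: "v j \<bullet> gradL c v k (w t) = - g (u j t)" if j: "j \<in> {1..k}" for j t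
  proof -
    have "v j \<bullet> gradL c v k (w t) = - (\<Sum>i\<in>{1..k}. g (u i t) * (v j \<bullet> v i))"
      by (simp add: grad_eq inner_sum_right u_def)
    also have "\<dots> = - (\<Sum>i\<in>{1..k}. if j = i then g (u i t) else 0)"
      using orth[OF j] by (intro arg_cong[where f=uminus] sum.cong) auto
    also have "\<dots> = - g (u j t)" using j by simp
    finally show ?thesis .
  qed
  have flowF: "(w has_vector_derivative F t) (at t within {0..})" if "t \<ge> 0" for t
    using flow[OF that] by (simp add: F_def)
  have du: "(u j has_real_derivative (g (u j t) - S t * u j t)) (at t within {0..})"
    if j: "j \<in> {1..k}" and t: "t \<ge> 0" for j t
  proof -
    have "((\<lambda>t. v j \<bullet> w t) has_vector_derivative v j \<bullet> F t) (at t within {0..})"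
      by (rule bounded_linear.has_vector_derivative[OF bounded_linear_inner_right flowF[OF t]])
    moreover have "v j \<bullet> F t = g (u j t) - S t * u j t"
      using vgrad[OF j, of t] wgrad[of t] by (simp add: F_def inner_diff_right u_def)
    ultimately show ?thesis
      by (simp add: has_real_derivative_iff_has_vector_derivative u_def[abs_def])
  qed
  define r where "r t = 1 - w t \<bullet> w t" for t
  have dr: "(r has_real_derivative (-2 * S t * r t)) (at t within {0..})" if t: "t \<ge> 0" for t
  proof -
    have "((\<lambda>t. w t \<bullet> w t) has_vector_derivative (w t \<bullet> F t + F t \<bullet> w t)) (at t within {0..})"
      by (rule bounded_bilinear.has_vector_derivative[OF bounded_bilinear_inner flowF[OF t] flowF[OF t]])
    moreover have "w t \<bullet> F t = S t * r t"
      using wgrad[of t] by (simp add: F_def inner_diff_right r_def algebra_simps)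
    ultimately have "((\<lambda>t. w t \<bullet> w t) has_real_derivative (2 * (S t * r t))) (at t within {0..})"
      by (simp add: has_real_derivative_iff_has_vector_derivative inner_commute)
    then have "((\<lambda>t. 1 - w t \<bullet> w t) has_real_derivative (0 - 2 * (S t * r t))) (at t within {0..})"
      by (intro derivative_intros)
    then show ?thesis by (simp add: r_def[abs_def] mult.assoc)
  qed
  have normv: "norm (v i) = 1" if "i \<in> {1..k}" for i
    using orth[OF that that] by (simp add: norm_eq_sqrt_inner)
  have u_le: "\<bar>u i t\<bar> \<le> norm (w t)" if "i \<in> {1..k}" for i t
    using Cauchy_Schwarz_ineq2[of "v i" "w t"] normv[OF that] by (simp add: u_def)
  have S_bound: "\<bar>S t\<bar> \<le> real k * (B * M)"
    if "\<And>i. i \<in> {1..k} \<Longrightarrow> \<bar>u i t\<bar> \<le> B" "\<And>x. \<bar>x\<bar> \<le> B \<Longrightarrow> \<bar>g x\<bar> \<le> M" for t B M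
  proof -
    have "\<bar>S t\<bar> \<le> (\<Sum>i\<in>{1..k}. \<bar>u i t * g (u i t)\<bar>)" unfolding S_def by (rule sum_abs)
    also have "\<dots> \<le> real (card {1..k}) * (B * M)"
    proof (rule sum_bounded_above)
      fix i assume i: "i \<in> {1..k}"
      have "\<bar>u i t\<bar> \<le> B" "\<bar>g (u i t)\<bar> \<le> M" using that i by auto
      then show "\<bar>u i t * g (u i t)\<bar> \<le> B * M" by (simp add: abs_mult mult_mono')
    qed
    finally show ?thesis by simp
  qed
  have locr: "\<exists>\<epsilon>>0. \<exists>K. \<forall>t\<in>{t0..t0+\<epsilon>}. \<bar>-2 * S t * r t\<bar> \<le> K * \<bar>r t\<bar>"
    if t0: "t0 \<ge> 0" and rz: "r t0 = 0" for t0
  proof -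
    obtain \<delta> M where dM: "\<delta> > 0" "\<And>x. \<bar>x\<bar> \<le> 1 + \<delta> \<Longrightarrow> \<bar>g x\<bar> \<le> M"
      using ps_ext_bound[OF a0 asm] g_eq by metis
    have n1: "norm (w t0) = 1" using rz by (simp add: r_def norm_eq_sqrt_inner)
    have "continuous (at t0 within {0..}) w"
      using flowF[OF t0] has_vector_derivative_continuous by blast
    then have "continuous (at t0 within {0..}) (\<lambda>t. norm (w t))" by (intro continuous_intros)
    then obtain d where d: "d > 0" "\<forall>t\<in>{t0..t0+d}. \<bar>norm (w t) - norm (w t0)\<bar> < \<delta>"
      using near_within[of t0 "\<lambda>t. norm (w t)" \<delta>] t0 dM(1) by blast
    have "\<forall>t\<in>{t0..t0+d}. \<bar>-2 * S t * r t\<bar> \<le> (2 * (real k * ((1 + \<delta>) * M))) * \<bar>r t\<bar>"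
    proof
      fix t assume tt: "t \<in> {t0..t0+d}"
      have "norm (w t) \<le> 1 + \<delta>" using d tt n1 by force
      then have "\<bar>S t\<bar> \<le> real k * ((1 + \<delta>) * M)"
        using u_le by (intro S_bound dM(2)) (auto intro: order_trans)
      then show "\<bar>-2 * S t * r t\<bar> \<le> (2 * (real k * ((1 + \<delta>) * M))) * \<bar>r t\<bar>"
        by (simp add: abs_mult mult_right_mono)
    qed
    then show ?thesis using d(1) by blast
  qed
  have sphere: "w t \<bullet> w t = 1" if t: "t \<ge> 0" for t
  proof -
    have r0: "r 0 = 0" using w0 by (simp add: r_def power2_norm_eq_inner[symmetric])
    have "r t \<ge> 0"
      by (rule keep_sign[OF dr _ locr t]) (use r0 in auto)
    moreover have "(\<lambda>t. - r t) t \<ge> 0"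
    proof (rule keep_sign[of "\<lambda>t. - r t" "\<lambda>t. - (-2 * S t * r t)"])
      show "((\<lambda>t. - r t) has_real_derivative - (-2 * S t * r t)) (at t within {0..})" if "t \<ge> 0" for t
        using dr[OF that] by (rule derivative_intros)
      show "\<exists>\<epsilon>>0. \<exists>K. \<forall>t\<in>{t0..t0+\<epsilon>}. \<bar>- (-2 * S t * r t)\<bar> \<le> K * \<bar>- r t\<bar>"
        if "t0 \<ge> 0" "- r t0 = 0" for t0
        using locr[of t0] that by simp
    qed (use r0 t in auto)
    ultimately show ?thesis by (simp add: r_def)
  qed
  have nw1: "norm (w t) = 1" if "t \<ge> 0" for t
    using sphere[OF that] by (simp add: norm_eq_sqrt_inner)
  define M0 where "M0 = (\<Sum>n. a n)"
  have gM0: "\<bar>g x\<bar> \<le> M0" if "\<bar>x\<bar> \<le> 1" for x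
    using ps_abs_summable(2)[OF a0 _ that] asm by (simp add: g_eq M0_def)
  have Sb: "\<bar>S t\<bar> \<le> real k * (1 * M0)" if "t \<ge> 0" for t
    by (rule S_bound) (use u_le[of _ t] nw1[OF that] gM0 in force)+
  obtain L where L: "\<And>x y. \<bar>x\<bar> \<le> 9/10 \<Longrightarrow> \<bar>y\<bar> \<le> 9/10 \<Longrightarrow> \<bar>g x - g y\<bar> \<le> L * \<bar>x - y\<bar>"
    using ps_lipschitz[OF a0 asm, of "9/10"] by (auto simp: g_eq)
  have bes: "(u i t)\<^sup>2 + (u j t)\<^sup>2 \<le> 1" if "i \<in> {1..k}" "j \<in> {1..k}" "i \<noteq> j" "t \<ge> 0" for i j t
    using bessel2[of "v i" "v j" "w t"] orth[OF that(1) that(1)] orth[OF that(2) that(2)]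
      orth[OF that(1) that(2)] that sphere[OF that(4)] by (simp add: u_def)
  have one: "1 \<in> {1..k}" using k_pos by simp
  have partI: "\<forall>t\<ge>0. \<forall>j\<in>{1..k}. v j \<bullet> w t \<le> v 1 \<bullet> w t" if pos: "\<forall>j\<in>{1..k}. v j \<bullet> w 0 > 0"
  proof (intro allI impI ballI)
    fix t :: real and j :: nat assume t: "t \<ge> 0" and j: "j \<in> {1..k}"
    show "v j \<bullet> w t \<le> v 1 \<bullet> w t"
    proof (cases "j = 1")
      case False
      have "u j 0 \<le> u 1 0" using u1max[OF j] pos j one unfolding u_def by (metis abs_of_pos)
      have "u j t \<le> u 1 t"
        by (rule pair_keep[OF du[OF one] du[OF j] Sb _ L \<open>u j 0 \<le> u 1 0\<close> t]) (use bes[OF one j] False in auto)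
      then show ?thesis by (simp add: u_def)
    qed simp
  qed
  have partII: "\<forall>t\<ge>0. \<forall>j\<in>{1..k}. \<bar>v j \<bullet> w t\<bar> \<le> \<bar>v 1 \<bullet> w t\<bar>" if ev: "\<forall>x. \<sigma>s (- x) = \<sigma>s x"
  proof (intro allI impI ballI)
    fix t :: real and j :: nat assume t: "t \<ge> 0" and j: "j \<in> {1..k}"
    have c_odd: "c p = 0" if "odd p" for p using hcoeff_odd_zero[OF ev that] by (simp add: c_def)
    have a_even: "a n = 0" if "even n" for n using c_odd[of "Suc n"] that by (simp add: a_def)
    have g_odd: "g (- x) = - g x" if x: "\<bar>x\<bar> \<le> 1" for x
    proof -
      have sx: "summable (\<lambda>n. a n * x ^ n)" using ps_abs_summable(1)[OF a0 _ x] asm by simp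
      have "(\<lambda>n. a n * (- x) ^ n) = (\<lambda>n. - (a n * x ^ n))"
      proof
        fix n show "a n * (- x) ^ n = - (a n * x ^ n)"
          by (cases "even n") (auto simp: a_even)
      qed
      then show ?thesis by (simp add: g_eq suminf_minus[OF sx])
    qed
    define y where "y t = - u j t" for t
    have dy: "(y has_real_derivative (g (y t) - S t * y t)) (at t within {0..})" if "t \<ge> 0" for t
    proof -
      have "(y has_real_derivative - (g (u j t) - S t * u j t)) (at t within {0..})"
        unfolding y_def[abs_def] using du[OF j that] by (rule derivative_intros)
      moreover have "g (y t) = - g (u j t)"
        unfolding y_def using g_odd u_le[OF j, of t] nw1[OF that] by simp
      ultimately show ?thesis by (simp add: y_def algebra_simps)
    qed
    show "\<bar>v j \<bullet> w t\<bar> \<le> \<bar>v 1 \<bullet> w t\<bar>"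
    proof (cases "j = 1")
      case False
      have b1: "(u 1 t)\<^sup>2 + (u j t)\<^sup>2 \<le> 1" "(u j t)\<^sup>2 + (u 1 t)\<^sup>2 \<le> 1"
           "(u 1 t)\<^sup>2 + (y t)\<^sup>2 \<le> 1" "(y t)\<^sup>2 + (u 1 t)\<^sup>2 \<le> 1" if "t \<ge> 0" for t
        using bes[OF one j] bes[OF j one] False that by (auto simp: y_def)
      have du1: "\<And>t. t \<ge> 0 \<Longrightarrow> (u 1 has_real_derivative (g (u 1 t) - S t * u 1 t)) (at t within {0..})"
        using du[OF one] .
      have duj: "\<And>t. t \<ge> 0 \<Longrightarrow> (u j has_real_derivative (g (u j t) - S t * u j t)) (at t within {0..})"
        using du[OF j] .
      have i0: "\<bar>u j 0\<bar> \<le> \<bar>u 1 0\<bar>" using u1max[OF j] by (simp add: u_def)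
      then consider "u j 0 \<le> u 1 0" "y 0 \<le> u 1 0" | "u 1 0 \<le> u j 0" "u 1 0 \<le> y 0"
        by (cases "0 \<le> u 1 0") (auto simp: y_def abs_le_iff)
      then have "\<bar>u j t\<bar> \<le> \<bar>u 1 t\<bar>"
      proof cases
        case 1
        have "u j t \<le> u 1 t" by (rule pair_keep[OF du1 duj Sb b1(1) L 1(1) t])
        moreover have "y t \<le> u 1 t" by (rule pair_keep[OF du1 dy Sb b1(3) L 1(2) t])
        ultimately show ?thesis by (simp add: y_def)
      next
        case 2
        have "u 1 t \<le> u j t" by (rule pair_keep[OF duj du1 Sb b1(2) L 2(1) t])
        moreover have "u 1 t \<le> y t" by (rule pair_keep[OF dy du1 Sb b1(4) L 2(2) t])
        ultimately show ?thesis by (simp add: y_def)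
      qed
      then show ?thesis by (simp add: u_def)
    qed simp
  qed
  show ?thesis using partI partII by blast
qed

end
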